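(* Let $q=2v+1$ be a prime power with $v$ odd, and suppose there exists an $(\mathbb F_q^\Box,\{k_1,\dots,k_n\})$ Heffter difference packing $\{B_1,\dots,B_n\}$. Then there exists a Heffter space over $\mathbb F_q$ with point set $\mathbb F_q^\Box$ and with $k_1+\dots+k_n$ parallel classes, exactly $k_i$ of which consist of blocks of size $k_i$ for each $i$ (counting with multiplicity over equal values of $k_i$), i.e. a $(v,\{k_1^{k_1},\dots,k_n^{k_n}\})$ Heffter space. Moreover, if each $B_i$ admits an ordering whose partial sums are pairwise distinct, then the Heffter space can be taken so that each of its blocks admits an ordering whose partial sums are pairwise distinct.
   Context: $\mathbb F_q^\Box$ denotes the multiplicative group of nonzero squares of $\mathbb F_q$; for $q\equiv3\pmod4$ it is a half-set of the additive group of $\mathbb F_q$, i.e. it contains exactly one of $g,-g$ for each $g\ne0$. Fix a group isomorphism $\phi:\mathbb F_q^\Box\to\mathbb Z_v$. A family $\{B_1,\dots,B_n\}$ of subsets of $\mathbb F_q^\Box$ with $|B_i|=k_i$ is an $(\mathbb F_q^\Box,\{k_1,\dots,k_n\})$ Heffter difference packing if: (H1) the multiset of all differences $a-b$ with $(a,b)$ an ordered pair of distinct elements of a common $\phi(B_i)$, taken over all $i$, has no repeated element in $\mathbb Z_v$; (H2) for each $i$, $k_i$ divides $v$ and the elements of $\phi(B_i)$ are pairwise distinct modulo $k_i$; (H3) each $B_i$ has sum $0$ in $\mathbb F_q$. A $(v,k)$ Heffter system on a half-set $V$ of an abelian group of order $2v+1$ is a partition of $V$ into blocks of size $k$ each summing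 to $0$. A Heffter space over $G$ is a partial linear space (any two distinct points in at most one block) on a half-set $V$ of $G$ with a resolution of its blocks into parallel classes (partitions of $V$), each of which is a Heffter system on $V$. *)

theory Defs
  imports Main "HOL-Library.Multiset"
begin

definition nz_squares :: "'a::field set" where
  "nz_squares = {x. x \<noteq> 0 \<and> (\<exists>y. x = y ^ 2)}"

text \<open>phi is a group isomorphism from the multiplicative group of nonzero squares
  onto Z_v, the latter represented by {0..<v} with addition mod v.\<close>
definition sq_iso :: "nat \<Rightarrow> ('a::field \<Rightarrow> nat) \<Rightarrow> bool" where
  "sq_iso v phi \<longleftrightarrow> bij_betw phi nz_squares {0..<v} \<and>
     (\<forall>x\<in>nz_squares. \<forall>y\<in>nz_squares. phi (x * y) = (phi x + phi y) mod v)"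

text \<open>Heffter difference packing {B_0,...,B_(n-1)} of the nonzero squares (w.r.t. phi),
  with k_i = card (B i).\<close>
definition heffter_diff_packing ::
    "nat \<Rightarrow> ('a::field \<Rightarrow> nat) \<Rightarrow> nat \<Rightarrow> (nat \<Rightarrow> 'a set) \<Rightarrow> bool" where
  "heffter_diff_packing v phi n B \<longleftrightarrow>
     (\<forall>i<n. B i \<subseteq> nz_squares) \<and>
     \<comment> \<open>(H1) all differences phi a - phi b in Z_v are distinct\<close>
     inj_on (\<lambda>(i, a, b). (int (phi a) - int (phi b)) mod int v)
       {(i, a, b). i < n \<and> a \<in> B i \<and> b \<in> B i \<and> a \<noteq> b} \<and>
     \<comment> \<open>(H2)\<close>
     (\<forall>i<n. card (B i) dvd v \<and> inj_on (\<lambda>x. phi x mod card (B i)) (B i)) \<and>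
     \<comment> \<open>(H3)\<close>
     (\<forall>i<n. \<Sum>(B i) = 0)"

definition heffter_system :: "'a::ab_group_add set \<Rightarrow> nat \<Rightarrow> 'a set set \<Rightarrow> bool" where
  "heffter_system V k P \<longleftrightarrow>
     \<Union>P = V \<and>
     (\<forall>X\<in>P. \<forall>Y\<in>P. X \<noteq> Y \<longrightarrow> X \<inter> Y = {}) \<and>
     (\<forall>X\<in>P. finite X \<and> card X = k \<and> \<Sum>X = 0)"

definition half_set :: "'a::ab_group_add set \<Rightarrow> bool" where
  "half_set V \<longleftrightarrow> 0 \<notin> V \<and> (\<forall>g. g \<noteq> 0 \<longrightarrow> (g \<in> V \<longleftrightarrow> - g \<notin> V))"

text \<open>A Heffter space on the half-set V, given by its resolution into the m parallel
  classes P 0, ..., P (m-1); class j is a Heffter system with block size ks j.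
  Blocks are counted with their position (class index); any two distinct blocks meet
  in at most one point (partial linear space).\<close>
definition heffter_space ::
    "'a::ab_group_add set \<Rightarrow> nat \<Rightarrow> (nat \<Rightarrow> nat) \<Rightarrow> (nat \<Rightarrow> 'a set set) \<Rightarrow> bool" where
  "heffter_space V m ks P \<longleftrightarrow>
     half_set V \<and>
     (\<forall>j<m. heffter_system V (ks j) (P j)) \<and>
     (\<forall>j<m. \<forall>j'<m. \<forall>X\<in>P j. \<forall>Y\<in>P j'. (j, X) \<noteq> (j', Y) \<longrightarrow> card (X \<inter> Y) \<le> 1)"

definition distinct_partial_sums_ordering :: "'a::ab_group_add set \<Rightarrow> bool" where
  "distinct_partial_sums_ordering X \<longleftrightarrow>
     (\<exists>xs. distinct xs \<and> set xs = X \<and>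
        distinct (map (\<lambda>j. sum_list (take j xs)) [1..<length xs + 1]))"

end

theory Submission
  imports Defs
begin

lemma sq_mult: "x \<in> nz_squares \<Longrightarrow> y \<in> nz_squares \<Longrightarrow> (x::'a::field) * y \<in> nz_squares"
  unfolding nz_squares_def by (auto simp: power_mult_distrib[symmetric])

lemma sq_div: "x \<in> nz_squares \<Longrightarrow> y \<in> nz_squares \<Longrightarrow> (y::'a::field) / x \<in> nz_squares"
  unfolding nz_squares_def by (auto simp: power_divide[symmetric])

lemma sq_one: "(1::'a::field) \<in> nz_squares"
  unfolding nz_squares_def by (auto intro: exI[of _ 1])

lemma sq_nz: "x \<in> nz_squares \<Longrightarrow> x \<noteq> 0"
  unfolding nz_squares_def by auto

lemma phi_lt: "sq_iso v phi \<Longrightarrow> x \<in> nz_squares \<Longrightarrow> phi x < v"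
  unfolding sq_iso_def bij_betw_def by auto

lemma phi_inj: "sq_iso v phi \<Longrightarrow> x \<in> nz_squares \<Longrightarrow> y \<in> nz_squares \<Longrightarrow> phi x = phi y \<Longrightarrow> x = y"
  unfolding sq_iso_def bij_betw_def inj_on_def by auto

lemma phi_mult: "sq_iso v phi \<Longrightarrow> x \<in> nz_squares \<Longrightarrow> y \<in> nz_squares \<Longrightarrow> phi (x*y) = (phi x + phi y) mod v"
  unfolding sq_iso_def by auto

lemma card_sq: fixes phi :: "'a::field \<Rightarrow> nat" shows "sq_iso v phi \<Longrightarrow> card (nz_squares::'a set) = v"
  unfolding sq_iso_def by (metis bij_betw_same_card card_atLeastLessThan diff_zero)

lemma double_mod_helper:
  fixes p v :: nat assumes "p < v" "p = (p + p) mod v" shows "p = 0"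
proof (cases "p + p < v")
  case True then show ?thesis using assms by simp
next
  case False
  then have "(p + p) mod v = (p + p - v) mod v" by (simp add: le_mod_geq)
  also have "\<dots> = p + p - v" using assms(1) by simp
  finally show ?thesis using assms False by linarith
qed

lemma phi_one: assumes "sq_iso v phi" shows "phi (1::'a::field) = 0"
proof -
  have "phi (1::'a) = (phi 1 + phi 1) mod v" using phi_mult[OF assms sq_one sq_one] by simp
  moreover have "phi (1::'a) < v" using phi_lt[OF assms sq_one] .
  ultimately show ?thesis by (rule double_mod_helper[rotated])
qed

lemma minus_one_nsq:
  fixes phi :: "'a::{field,finite} \<Rightarrow> nat"
  assumes q: "card (UNIV :: 'a set) = 2 * v + 1" and v: "odd v" and phi: "sq_iso v phi"
  shows "(-1::'a) \<notin> nz_squares"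
proof
  assume m: "(-1::'a) \<in> nz_squares"
  define p where "p = phi (-1::'a)"
  have "0 = (p + p) mod v" using phi_mult[OF phi m m] phi_one[OF phi] by (simp add: p_def)
  moreover have "p < v" using phi_lt[OF phi m] p_def by simp
  ultimately have "p = 0" using v
  proof -
    assume a: "0 = (p + p) mod v" "p < v"
    have "v dvd p + p" using a(1) by (simp add: dvd_eq_mod_eq_0)
    then obtain c where c: "p + p = v * c" by (rule dvdE)
    have "v * c < v * 2" using a(2) c by linarith
    then have "c < 2" by simp
    then have "c = 0 \<or> c = 1" by auto
    moreover have "c \<noteq> 1"
    proof
      assume "c = 1" then have "v = p + p" using c by simp
      then show False using v by simp
    qed
    ultimately show "p = 0" using c by simp
  qed
  then have "(-1::'a) = 1" using phi_inj[OF phi m sq_one] phi_one[OF phi] p_def by simp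
  then have "(1::'a) + 1 = 1 + -1" by simp
  then have two: "(1::'a) + 1 = 0" by simp
  have injsq: "inj (\<lambda>x::'a. x ^ 2)"
  proof (rule injI)
    fix x y :: 'a assume "x^2 = y^2"
    have "(2::'a) = 1 + 1" by (rule one_add_one[symmetric])
    also note two
    finally have t2: "(2::'a) = 0" .
    have "(x - y)^2 = x^2 + y^2 - 2 * x * y" by (rule power2_diff)
    also have "\<dots> = y^2 + y^2" using \<open>x^2 = y^2\<close> t2 by simp
    also have "\<dots> = 2 * y^2" by (rule mult_2[symmetric])
    also have "\<dots> = 0" using t2 by simp
    finally have "(x - y)^2 = 0" .
    then show "x = y" by simp
  qed
  have fin: "finite (UNIV :: 'a set)" by simp
  have su: "surj (\<lambda>x::'a. x ^ 2)" by (rule finite_UNIV_inj_surj[OF fin injsq])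
  have "nz_squares = (UNIV - {0::'a})"
  proof (rule set_eqI)
    fix z :: 'a
    have "z \<in> range (\<lambda>x::'a. x ^ 2)" using su by simp
    then obtain y where "z = y ^ 2" by blast
    then show "z \<in> nz_squares \<longleftrightarrow> z \<in> UNIV - {0}" unfolding nz_squares_def by blast
  qed
  then have "card (nz_squares::'a set) = card (UNIV - {0::'a})" by (rule arg_cong)
  also have "\<dots> = 2 * v" using q by (simp add: card_Diff_singleton)
  finally have "v = 2 * v" using card_sq[OF phi] by simp
  then have "v = 0" by simp
  then show False using v by simp
qed


lemma half_sq:
  fixes phi :: "'a::{field,finite} \<Rightarrow> nat"
  assumes q: "card (UNIV :: 'a set) = 2 * v + 1" and v: "odd v" and phi: "sq_iso v phi"
  shows "half_set (nz_squares :: 'a set)"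
proof -
  let ?S = "nz_squares :: 'a set"
  let ?N = "UNIV - {0} - ?S"
  have cS: "card ?S = v" using card_sq[OF phi] .
  have sub: "?S \<subseteq> UNIV - {0}" using sq_nz by auto
  have "card (UNIV - {0::'a}) = 2 * v" using q by (simp add: card_Diff_singleton)
  moreover have "card ?N = card (UNIV - {0::'a}) - card ?S" by (rule card_Diff_subset) (simp_all add: sub)
  ultimately have cN: "card ?N = v" using cS by simp
  have im: "uminus ` ?S \<subseteq> ?N"
  proof
    fix y assume "y \<in> uminus ` ?S"
    then obtain s where s: "s \<in> ?S" "y = - s" by auto
    have "- s \<notin> ?S"
    proof
      assume "- s \<in> ?S"
      then have "(- s) / s \<in> ?S" using sq_div[OF s(1)] by blast
      then show False using minus_one_nsq[OF q v phi] sq_nz[OF s(1)] by simp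
    qed
    moreover have "y \<noteq> 0" using s sq_nz[OF s(1)] by simp
    ultimately show "y \<in> ?N" using s by simp
  qed
  have "card (uminus ` ?S) = v" using cS by (simp add: card_image)
  then have eq: "uminus ` ?S = ?N" by (intro card_subset_eq im) (simp_all add: cN)
  show ?thesis unfolding half_set_def
  proof (intro conjI allI impI)
    show "0 \<notin> ?S" using sq_nz by blast
    fix g :: 'a assume g: "g \<noteq> 0"
    show "g \<in> ?S \<longleftrightarrow> - g \<notin> ?S"
    proof
      assume "g \<in> ?S" then have "- g \<in> uminus ` ?S" by (rule imageI)
      then have "- g \<in> ?N" unfolding eq .
      then show "- g \<notin> ?S" by simp
    next
      assume "- g \<notin> ?S"
      then have "- g \<in> ?N" using g by simp
      then have "- g \<in> uminus ` ?S" unfolding eq .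
      then obtain s where "s \<in> ?S" "- g = - s" by (rule imageE)
      then show "g \<in> ?S" by simp
    qed
  qed
qed

lemma nat_mod_add_cancel: "((a::nat) + b) mod k = (c + b) mod k \<Longrightarrow> a mod k = c mod k"
proof -
  assume h: "((a::nat) + b) mod k = (c + b) mod k"
  then have "(int a + int b) mod int k = (int c + int b) mod int k" by (metis of_nat_add of_nat_mod)
  then have "int k dvd (int a + int b) - (int c + int b)" using mod_eq_dvd_iff by blast
  then have "int a mod int k = int c mod int k" by (simp add: mod_eq_dvd_iff)
  then show ?thesis by (metis of_nat_eq_iff of_nat_mod)
qed

definition cls :: "('a::field \<Rightarrow> nat) \<Rightarrow> 'a set \<Rightarrow> nat \<Rightarrow> 'a set set" where
  "cls phi Bi t = {(\<lambda>b. x * b) ` Bi | x. x \<in> nz_squares \<and> phi x mod card Bi = t}"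

lemma phi_mult_mod:
  assumes "sq_iso v phi" "k dvd v" "x \<in> nz_squares" "y \<in> nz_squares"
  shows "phi (x*y) mod k = (phi x + phi y) mod k"
  using phi_mult[OF assms(1,3,4)] assms(2) by (simp add: mod_mod_cancel)

lemma sys:
  fixes phi :: "'a::{field,finite} \<Rightarrow> nat"
  assumes phi: "sq_iso v phi" and vpos: "v > 0"
    and Bsub: "Bi \<subseteq> nz_squares" and kdvd: "card Bi dvd v"
    and inj: "inj_on (\<lambda>x. phi x mod card Bi) Bi" and s0: "\<Sum>Bi = 0"
    and t: "t < card Bi"
  shows "heffter_system (nz_squares::'a set) (card Bi) (cls phi Bi t)"
proof -
  let ?k = "card Bi"
  have kpos: "?k > 0" using kdvd vpos by (metis dvd_0_left_iff gr0I less_irrefl)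
  have res: "(\<lambda>x. phi x mod ?k) ` Bi = {0..<?k}"
  proof (rule card_subset_eq)
    show "(\<lambda>x. phi x mod ?k) ` Bi \<subseteq> {0..<?k}" using kpos by auto
    show "card ((\<lambda>x. phi x mod ?k) ` Bi) = card {0..<?k}" using inj by (simp add: card_image)
  qed simp
  have U: "\<Union>(cls phi Bi t) = nz_squares"
  proof
    show "\<Union>(cls phi Bi t) \<subseteq> nz_squares"
      unfolding cls_def using Bsub sq_mult by blast
    show "nz_squares \<subseteq> \<Union>(cls phi Bi t)"
    proof
      fix s :: 'a assume s: "s \<in> nz_squares"
      define r where "r = (phi s + (?k - t)) mod ?k"
      have "r \<in> {0..<?k}" using kpos r_def by auto
      then have "r \<in> (\<lambda>x. phi x mod ?k) ` Bi" using res by simp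
      then obtain b where b: "b \<in> Bi" "phi b mod ?k = r" by blast
      have bS: "b \<in> nz_squares" using b Bsub by blast
      define x where "x = s / b"
      have xS: "x \<in> nz_squares" using sq_div[OF bS s] x_def by simp
      have sx: "s = x * b" using sq_nz[OF bS] x_def by simp
      have e1: "phi s mod ?k = (phi x + phi b) mod ?k" using phi_mult_mod[OF phi kdvd xS bS] sx by simp
      have "phi x mod ?k = t"
      proof -
        have "(phi x + phi b) mod ?k = (phi x + phi b mod ?k) mod ?k" by (rule mod_add_right_eq[symmetric])
        also have "\<dots> = (phi x + (phi s + (?k - t)) mod ?k) mod ?k" using b(2) r_def by simp
        also have "\<dots> = (phi x + (phi s + (?k - t))) mod ?k" by (rule mod_add_right_eq)
        finally have h1: "(phi x + (phi s + (?k - t))) mod ?k = phi s mod ?k" using e1 by simp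
        have ee: "(phi x + (?k - t)) + phi s = phi x + (phi s + (?k - t))" by linarith
        have h2: "((phi x + (?k - t)) + phi s) mod ?k = (0 + phi s) mod ?k" unfolding ee using h1 by simp
        have h3: "(phi x + (?k - t)) mod ?k = 0 mod ?k" using nat_mod_add_cancel[OF h2] .
        have "(phi x + (?k - t) + t) mod ?k = ((phi x + (?k - t)) mod ?k + t) mod ?k"
          by (rule mod_add_left_eq[symmetric])
        also have "\<dots> = t mod ?k" using h3 by simp
        finally have h4: "(phi x + (?k - t) + t) mod ?k = t mod ?k" .
        have "phi x + (?k - t) + t = phi x + ?k" using t by linarith
        then have "(phi x + ?k) mod ?k = t mod ?k" using h4 by simp
        then show ?thesis using t by simp
      qed
      then have "(\<lambda>b. x * b) ` Bi \<in> cls phi Bi t" unfolding cls_def using xS by blast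
      moreover have "s \<in> (\<lambda>b. x * b) ` Bi" using sx b(1) by blast
      ultimately show "s \<in> \<Union>(cls phi Bi t)" by blast
    qed
  qed
  have D: "\<forall>X\<in>cls phi Bi t. \<forall>Y\<in>cls phi Bi t. X \<noteq> Y \<longrightarrow> X \<inter> Y = {}"
  proof (intro ballI impI)
    fix X Y assume X: "X \<in> cls phi Bi t" and Y: "Y \<in> cls phi Bi t" and ne: "X \<noteq> Y"
    obtain x where x: "x \<in> nz_squares" "phi x mod ?k = t" "X = (\<lambda>b. x * b) ` Bi"
      using X unfolding cls_def by blast
    obtain y where y: "y \<in> nz_squares" "phi y mod ?k = t" "Y = (\<lambda>b. y * b) ` Bi"
      using Y unfolding cls_def by blast
    show "X \<inter> Y = {}"
    proof (rule ccontr)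
      assume "X \<inter> Y \<noteq> {}"
      then obtain b b' where bb: "b \<in> Bi" "b' \<in> Bi" "x * b = y * b'" using x y by auto
      have bS: "b \<in> nz_squares" "b' \<in> nz_squares" using bb Bsub by auto
      have "(phi x + phi b) mod ?k = phi (x * b) mod ?k" using phi_mult_mod[OF phi kdvd x(1) bS(1)] by (rule sym)
      also have "\<dots> = phi (y * b') mod ?k" using bb(3) by (rule arg_cong)
      also have "\<dots> = (phi y + phi b') mod ?k" by (rule phi_mult_mod[OF phi kdvd y(1) bS(2)])
      finally have "(phi x + phi b) mod ?k = (phi y + phi b') mod ?k" .
      then have "(phi x mod ?k + phi b) mod ?k = (phi y mod ?k + phi b') mod ?k" by (simp only: mod_add_left_eq)
      then have "(phi b + t) mod ?k = (phi b' + t) mod ?k" using x(2) y(2) by (simp only: add.commute)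
      then have "phi b mod ?k = phi b' mod ?k" by (rule nat_mod_add_cancel)
      then have "b = b'" using inj bb by (auto simp: inj_on_def)
      then have "x = y" using bb(3) sq_nz[OF bS(1)] by simp
      then show False using ne x y by simp
    qed
  qed
  have C: "\<forall>X\<in>cls phi Bi t. finite X \<and> card X = ?k \<and> \<Sum>X = 0"
  proof
    fix X assume X: "X \<in> cls phi Bi t"
    obtain x where x: "x \<in> nz_squares" "X = (\<lambda>b. x * b) ` Bi"
      using X unfolding cls_def by blast
    have ij: "inj_on (\<lambda>b. x * b) Bi" using sq_nz[OF x(1)] by (auto simp: inj_on_def)
    have "card X = ?k" using x(2) ij by (simp add: card_image)
    moreover have "\<Sum>X = 0" using x(2) ij s0 by (simp add: sum.reindex sum_distrib_left[symmetric])
    ultimately show "finite X \<and> card X = ?k \<and> \<Sum>X = 0" by simp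
  qed
  show ?thesis unfolding heffter_system_def by (intro conjI U D C)
qed


lemma diff_shift:
  fixes phi :: "'a::field \<Rightarrow> nat"
  assumes phi: "sq_iso v phi" and z: "z \<in> nz_squares" and u: "u \<in> nz_squares" and w: "w \<in> nz_squares"
  shows "(int (phi (z*u)) - int (phi (z*w))) mod int v = (int (phi u) - int (phi w)) mod int v"
proof -
  have "int (phi (z*u)) = (int (phi z) + int (phi u)) mod int v"
    using phi_mult[OF phi z u] by (simp add: of_nat_mod)
  moreover have "int (phi (z*w)) = (int (phi z) + int (phi w)) mod int v"
    using phi_mult[OF phi z w] by (simp add: of_nat_mod)
  ultimately have "(int (phi (z*u)) - int (phi (z*w))) mod int v
      = ((int (phi z) + int (phi u)) - (int (phi z) + int (phi w))) mod int v"
    by (simp add: mod_diff_eq)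
  also have "\<dots> = (int (phi u) - int (phi w)) mod int v" by simp
  finally show ?thesis .
qed

lemma pls:
  fixes phi :: "'a::{field,finite} \<Rightarrow> nat"
  assumes phi: "sq_iso v phi" and pack: "heffter_diff_packing v phi n B"
    and i: "i < n" and i': "i' < n"
    and X: "X \<in> cls phi (B i) t" and Y: "Y \<in> cls phi (B i') t'"
    and ne: "(i, t) \<noteq> (i', t') \<or> X \<noteq> Y"
  shows "card (X \<inter> Y) \<le> 1"
proof (rule ccontr)
  assume "\<not> card (X \<inter> Y) \<le> 1"
  then obtain a c where ac: "a \<in> X" "a \<in> Y" "c \<in> X" "c \<in> Y" "a \<noteq> c"
    using card_le_Suc0_iff_eq[of "X \<inter> Y"] by auto
  obtain x where x: "x \<in> nz_squares" "phi x mod card (B i) = t" "X = (\<lambda>b. x * b) ` B i"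
    using X unfolding cls_def by blast
  obtain y where y: "y \<in> nz_squares" "phi y mod card (B i') = t'" "Y = (\<lambda>b. y * b) ` B i'"
    using Y unfolding cls_def by blast
  have Bs: "B i \<subseteq> nz_squares" "B i' \<subseteq> nz_squares" using pack i i' unfolding heffter_diff_packing_def by auto
  have injD: "inj_on (\<lambda>(i, a, b). (int (phi a) - int (phi b)) mod int v)
       {(i, a, b). i < n \<and> a \<in> B i \<and> b \<in> B i \<and> a \<noteq> b}"
    using pack unfolding heffter_diff_packing_def by blast
  obtain b1 where b1: "b1 \<in> B i" "a = x * b1" using ac(1) x(3) by blast
  obtain b2 where b2: "b2 \<in> B i" "c = x * b2" using ac(3) x(3) by blast
  obtain d1 where d1: "d1 \<in> B i'" "a = y * d1" using ac(2) y(3) by blast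
  obtain d2 where d2: "d2 \<in> B i'" "c = y * d2" using ac(4) y(3) by blast
  have "b1 \<noteq> b2" using b1 b2 ac(5) by blast
  have "d1 \<noteq> d2" using d1 d2 ac(5) by blast
  have S4: "b1 \<in> nz_squares" "b2 \<in> nz_squares" "d1 \<in> nz_squares" "d2 \<in> nz_squares"
    using Bs b1 b2 d1 d2 by auto
  have "(int (phi b1) - int (phi b2)) mod int v = (int (phi a) - int (phi c)) mod int v"
    using diff_shift[OF phi x(1) S4(1,2), symmetric] b1(2) b2(2) by simp
  also have "\<dots> = (int (phi d1) - int (phi d2)) mod int v"
    using diff_shift[OF phi y(1) S4(3,4)] d1(2) d2(2) by simp
  finally have eqD: "(int (phi b1) - int (phi b2)) mod int v = (int (phi d1) - int (phi d2)) mod int v" .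
  have "(i, b1, b2) = (i', d1, d2)"
  proof (rule inj_onD[OF injD])
    show "(case (i, b1, b2) of (i, a, b) \<Rightarrow> (int (phi a) - int (phi b)) mod int v) =
          (case (i', d1, d2) of (i, a, b) \<Rightarrow> (int (phi a) - int (phi b)) mod int v)"
      using eqD by simp
    show "(i, b1, b2) \<in> {(i, a, b). i < n \<and> a \<in> B i \<and> b \<in> B i \<and> a \<noteq> b}"
      using i b1 b2 \<open>b1 \<noteq> b2\<close> by simp
    show "(i', d1, d2) \<in> {(i, a, b). i < n \<and> a \<in> B i \<and> b \<in> B i \<and> a \<noteq> b}"
      using i' d1 d2 \<open>d1 \<noteq> d2\<close> by simp
  qed
  then have ii: "i = i'" and bd: "b1 = d1" by auto
  have "b1 \<noteq> 0" using b1(1) Bs sq_nz by blast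
  then have xy: "x = y" using b1(2) d1(2) bd by simp
  then have "t = t'" using x(2) y(2) ii by simp
  moreover have "X = Y" using x(3) y(3) xy ii by simp
  ultimately show False using ne ii by simp
qed

lemma dps_block:
  fixes phi :: "'a::field \<Rightarrow> nat"
  assumes X: "X \<in> cls phi Bi t" and d: "distinct_partial_sums_ordering Bi"
  shows "distinct_partial_sums_ordering X"
proof -
  obtain x where x: "x \<in> nz_squares" "X = (\<lambda>b. x * b) ` Bi"
    using X unfolding cls_def by blast
  have x0: "x \<noteq> 0" using x(1) sq_nz by blast
  obtain xs where xs: "distinct xs" "set xs = Bi"
      "distinct (map (\<lambda>j. sum_list (take j xs)) [1..<length xs + 1])"
    using d unfolding distinct_partial_sums_ordering_def by blast
  let ?ys = "map (\<lambda>b. x * b) xs"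
  have ij: "inj_on (\<lambda>b. x * b) A" for A using x0 by (auto simp: inj_on_def)
  have "distinct ?ys" using xs(1) ij by (simp add: distinct_map)
  moreover have "set ?ys = X" using xs(2) x(2) by simp
  moreover have "map (\<lambda>j. sum_list (take j ?ys)) [1..<length ?ys + 1]
      = map (\<lambda>b. x * b) (map (\<lambda>j. sum_list (take j xs)) [1..<length xs + 1])"
    by (simp add: take_map sum_list_const_mult)
  then have "distinct (map (\<lambda>j. sum_list (take j ?ys)) [1..<length ?ys + 1])"
    using xs(3) ij by (simp only: distinct_map)
  ultimately show ?thesis unfolding distinct_partial_sums_ordering_def by blast
qed


definition idxL :: "nat \<Rightarrow> (nat \<Rightarrow> nat) \<Rightarrow> (nat \<times> nat) list" where
  "idxL n f = concat (map (\<lambda>i. map (\<lambda>t. (i, t)) [0..<f i]) [0..<n])"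

lemma idxL_set: "set (idxL n f) = {(i, t). i < n \<and> t < f i}"
  unfolding idxL_def by auto

lemma idxL_distinct: "distinct (idxL n f)"
proof (induction n)
  case 0 then show ?case by (simp add: idxL_def)
next
  case (Suc n)
  have "idxL (Suc n) f = idxL n f @ map (\<lambda>t. (n, t)) [0..<f n]" by (simp add: idxL_def)
  moreover have "set (idxL n f) \<inter> set (map (\<lambda>t. (n, t)) [0..<f n]) = {}" by (auto simp: idxL_set)
  moreover have "distinct (map (\<lambda>t. (n, t)) [0..<f n])" by (simp add: distinct_map inj_on_def)
  ultimately show ?case using Suc.IH by simp
qed

lemma idxL_length: "length (idxL n f) = (\<Sum>i<n. f i)"
  by (induction n) (simp_all add: idxL_def)

lemma idxL_mset: "mset (map (\<lambda>p. f (fst p)) (idxL n f)) = (\<Sum>i<n. replicate_mset (f i) (f i))"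
proof (induction n)
  case 0 then show ?case by (simp add: idxL_def)
next
  case (Suc n)
  have "idxL (Suc n) f = idxL n f @ map (\<lambda>t. (n, t)) [0..<f n]" by (simp add: idxL_def)
  moreover have "map (\<lambda>p. f (fst p)) (map (\<lambda>t. (n, t)) [0..<f n]) = replicate (f n) (f n)"
    by (simp add: o_def map_replicate_const)
  ultimately show ?case using Suc.IH by simp
qed

lemma map_nth_comp: "map (\<lambda>j. g (xs ! j)) [0..<length xs] = map g xs"
proof -
  have "map (\<lambda>j. g (xs ! j)) [0..<length xs] = map g (map ((!) xs) [0..<length xs])" by simp
  then show ?thesis by (simp only: map_nth)
qed

theorem theorem4p3:
  fixes v n :: nat and phi :: "'a::{field, finite} \<Rightarrow> nat" and B :: "nat \<Rightarrow> 'a set"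
  assumes q: "card (UNIV :: 'a set) = 2 * v + 1"
    and v_odd: "odd v"
    and phi: "sq_iso v phi"
    and pack: "heffter_diff_packing v phi n B"
  shows "(\<exists>P ks. heffter_space (nz_squares :: 'a set) (\<Sum>i<n. card (B i)) ks P \<and>
            mset (map ks [0..<(\<Sum>i<n. card (B i))]) =
              (\<Sum>i<n. replicate_mset (card (B i)) (card (B i))))
       \<and> ((\<forall>i<n. distinct_partial_sums_ordering (B i)) \<longrightarrow>
          (\<exists>P ks. heffter_space (nz_squares :: 'a set) (\<Sum>i<n. card (B i)) ks P \<and>
            mset (map ks [0..<(\<Sum>i<n. card (B i))]) =
              (\<Sum>i<n. replicate_mset (card (B i)) (card (B i))) \<and>
            (\<forall>j<(\<Sum>i<n. card (B i)). \<forall>X\<in>P j. distinct_partial_sums_ordering X)))"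
proof -
  define f where "f = (\<lambda>i. card (B i))"
  define L where "L = idxL n f"
  define m where "m = (\<Sum>i<n. card (B i))"
  define P where "P = (\<lambda>j. cls phi (B (fst (L ! j))) (snd (L ! j)))"
  define ks where "ks = (\<lambda>j. card (B (fst (L ! j))))"
  have lenL: "length L = m" unfolding L_def m_def f_def by (simp add: idxL_length)
  have distL: "distinct L" unfolding L_def by (rule idxL_distinct)
  have mem: "fst (L ! j) < n \<and> snd (L ! j) < card (B (fst (L ! j)))" if "j < m" for j
  proof -
    have "L ! j \<in> set L" using that lenL by simp
    then show ?thesis unfolding L_def idxL_set f_def by (auto split: prod.splits)
  qed
  have vpos: "v > 0" using v_odd by (cases v) auto
  have Pk: "B i \<subseteq> nz_squares" "card (B i) dvd v" "inj_on (\<lambda>x. phi x mod card (B i)) (B i)" "\<Sum>(B i) = 0"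
    if "i < n" for i
    using pack that unfolding heffter_diff_packing_def by auto
  have HS: "heffter_space (nz_squares :: 'a set) m ks P"
    unfolding heffter_space_def
  proof (intro conjI allI impI ballI)
    show "half_set (nz_squares :: 'a set)" by (rule half_sq[OF q v_odd phi])
  next
    fix j assume j: "j < m"
    show "heffter_system nz_squares (ks j) (P j)"
      unfolding P_def ks_def using mem[OF j] Pk[of "fst (L ! j)"]
      by (intro sys[OF phi vpos]) auto
  next
    fix j j' X Y assume j: "j < m" and j': "j' < m" and X: "X \<in> P j" and Y: "Y \<in> P j'"
      and ne: "(j, X) \<noteq> (j', Y)"
    have ne2: "(fst (L ! j), snd (L ! j)) \<noteq> (fst (L ! j'), snd (L ! j')) \<or> X \<noteq> Y"
    proof (cases "j = j'")
      case True then show ?thesis using ne by simp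
    next
      case False
      then have "L ! j \<noteq> L ! j'" using distL j j' lenL by (simp add: nth_eq_iff_index_eq)
      then show ?thesis by simp
    qed
    show "card (X \<inter> Y) \<le> 1"
      by (rule pls[OF phi pack _ _ X[unfolded P_def] Y[unfolded P_def] ne2]) (use mem[OF j] mem[OF j'] in auto)
  qed
  have MS: "mset (map ks [0..<m]) = (\<Sum>i<n. replicate_mset (card (B i)) (card (B i)))"
  proof -
    have "map ks [0..<m] = map (\<lambda>p. f (fst p)) L"
      unfolding ks_def f_def using map_nth_comp[of "\<lambda>p. card (B (fst p))" L] lenL by simp
    then show ?thesis unfolding L_def using idxL_mset[of f n] by (simp add: f_def)
  qed
  have DP: "\<forall>j<m. \<forall>X\<in>P j. distinct_partial_sums_ordering X"
    if d: "\<forall>i<n. distinct_partial_sums_ordering (B i)"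
  proof (intro allI impI ballI)
    fix j X assume j: "j < m" and X: "X \<in> P j"
    show "distinct_partial_sums_ordering X"
      using dps_block[OF X[unfolded P_def]] d mem[OF j] by blast
  qed
  show ?thesis unfolding m_def[symmetric] using HS MS DP by blast
qed

end
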